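(* There exist an absolute constant $c>0$ and an integer $N$ such that for every integer $n\geq N$ the following holds. Let $f:\mathbb{R}\to\mathbb{R}$ be the continuous function which equals $1$ on $[\frac{1}{n},1-\frac{1}{n}]$, equals $-1$ on $[-1+\frac{1}{n},-\frac{1}{n}]$, equals $0$ for $|t|\geq 1$, and is linear on each of the intervals $[-1,-1+\frac{1}{n}]$, $[-\frac{1}{n},\frac{1}{n}]$ and $[1-\frac{1}{n},1]$. Let $\phi_n(x)=c_n\left(1-\frac{x^2}{4}\right)^{n^2}$, with $c_n>0$ chosen so that $\int_{-2}^2\phi_n(x)\,dx=1$, and let $P_n(t)=\int_{-1}^1 f(x)\phi_n(t-x)\,dx$. Then $P_n$ is a polynomial of degree $d=2n^2-1$ and $$\bigg|\,\mathrm{p.v.}\int_{\mathbb{R}} e^{iP_n(t)}\frac{dt}{t}\bigg|\geq c\log d.$$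
   Context: The principal value integral is $\mathrm{p.v.}\int_{\mathbb{R}} e^{iP(t)}\frac{dt}{t}=\lim_{\epsilon\to 0^+,\,R\to\infty}\int_{\epsilon\leq |t|\leq R} e^{iP(t)}\frac{dt}{t}$. *)

theory Defs
  imports "HOL-Analysis.Analysis" "HOL-Computational_Algebra.Polynomial"
begin

definition f_fun :: "nat \<Rightarrow> real \<Rightarrow> real" where
  "f_fun n t =
     (if \<bar>t\<bar> \<ge> 1 then 0
      else if \<bar>t\<bar> \<le> 1 / real n then real n * t
      else if \<bar>t\<bar> \<le> 1 - 1 / real n then sgn t
      else sgn t * real n * (1 - \<bar>t\<bar>))"

definition c_const :: "nat \<Rightarrow> real" where
  "c_const n = 1 / integral {-2..2} (\<lambda>x. (1 - x\<^sup>2 / 4) ^ (n\<^sup>2))"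

definition phi :: "nat \<Rightarrow> real \<Rightarrow> real" where
  "phi n x = c_const n * (1 - x\<^sup>2 / 4) ^ (n\<^sup>2)"

definition P_fun :: "nat \<Rightarrow> real \<Rightarrow> real" where
  "P_fun n t = integral {-1..1} (\<lambda>x. f_fun n x * phi n (t - x))"

definition pv_has_value :: "(real \<Rightarrow> complex) \<Rightarrow> complex \<Rightarrow> bool" where
  "pv_has_value g L \<longleftrightarrow>
     ((\<lambda>(\<epsilon>, R). integral {t. \<epsilon> \<le> \<bar>t\<bar> \<and> \<bar>t\<bar> \<le> R} g) \<longlongrightarrow> L)
       (at_right 0 \<times>\<^sub>F at_top)"

end

theory Submission
  imports Defs
begin
definition fc :: "nat \<Rightarrow> real \<Rightarrow> real" where
  "fc n t = max (min (min (real n * t) 1) (real n * (1 - t))) 0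
          + min (max (max (real n * t) (-1)) (- real n * (1 + t))) 0"

lemma f_eq_fc: assumes "n \<ge> 2" shows "f_fun n t = fc n t"
proof -
  define N where "N = real n"
  define u where "u = N * t"
  have n: "N \<ge> 2" using assms by (simp add: N_def)
  have e1: "(\<bar>t\<bar> \<ge> 1) = (\<bar>u\<bar> \<ge> N)" using n by (auto simp: u_def abs_mult)
  have e2: "(\<bar>t\<bar> \<le> 1 / N) = (\<bar>u\<bar> \<le> 1)" using n by (auto simp: u_def abs_mult field_simps)
  have e3: "(\<bar>t\<bar> \<le> 1 - 1 / N) = (\<bar>u\<bar> \<le> N - 1)" using n by (auto simp: u_def abs_mult field_simps)
  have e4: "sgn t = sgn u" using n by (simp add: u_def sgn_mult)
  have e5: "sgn u * N * (1 - \<bar>t\<bar>) = sgn u * (N - \<bar>u\<bar>)" using n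
    by (simp add: u_def sgn_mult abs_mult algebra_simps)
  have f: "f_fun n t = (if \<bar>u\<bar> \<ge> N then 0 else if \<bar>u\<bar> \<le> 1 then u else if \<bar>u\<bar> \<le> N - 1 then sgn u
     else sgn u * (N - \<bar>u\<bar>))"
    unfolding f_fun_def N_def[symmetric] e1 e2 e3 e5 e4 u_def[symmetric] by (rule refl)
  have g: "fc n t = max (min (min u 1) (N - u)) 0 + min (max (max u (-1)) (-N - u)) 0"
    unfolding fc_def N_def[symmetric] u_def by (simp add: algebra_simps)
  show ?thesis unfolding f g using n
    by (auto simp: sgn_if abs_if max_def min_def)
qed

definition fu :: "real \<Rightarrow> real \<Rightarrow> real" where
  "fu N u = max (min (min u 1) (N - u)) 0 + min (max (max u (-1)) (- N - u)) 0"

lemma fc_u: "fc n t = fu (real n) (real n * t)"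
  unfolding fc_def fu_def by (simp add: algebra_simps)

lemma fc_cont: "continuous_on S (fc n)"
  unfolding fc_def by (intro continuous_intros)

lemma fu_odd: "fu N (-u) = - fu N u" unfolding fu_def by (auto simp: max_def min_def)
lemma fu_bound: "N \<ge> 2 \<Longrightarrow> \<bar>fu N u\<bar> \<le> 1" unfolding fu_def by (auto simp: max_def min_def)
lemma fu_nonneg: "N \<ge> 2 \<Longrightarrow> u \<ge> 0 \<Longrightarrow> fu N u \<ge> 0" unfolding fu_def by (auto simp: max_def min_def)
lemma fu_one: "N \<ge> 2 \<Longrightarrow> u \<ge> 1 \<Longrightarrow> N - u \<ge> 1 \<Longrightarrow> fu N u = 1" unfolding fu_def by (auto simp: max_def min_def)

lemma fc_odd: "fc n (-t) = - fc n t"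
  unfolding fc_u using fu_odd by simp

lemma fc_bound: assumes "n \<ge> 2" shows "\<bar>fc n t\<bar> \<le> 1"
  using assms unfolding fc_u by (intro fu_bound) auto

lemma fc_nonneg: assumes "n \<ge> 2" "t \<ge> 0" shows "fc n t \<ge> 0"
  using assms unfolding fc_u by (intro fu_nonneg) auto

lemma fc_one: assumes "n \<ge> 2" "1 / real n \<le> t" "t \<le> 1 - 1/real n" shows "fc n t = 1"
proof -
  have n: "real n \<ge> 2" using assms by simp
  have a: "real n * t \<ge> 1" using assms n by (simp add: field_simps)
  have b: "real n - real n * t \<ge> 1" using assms n by (simp add: field_simps)
  show ?thesis unfolding fc_u using a b n by (intro fu_one) auto
qed

definition G0 :: "nat \<Rightarrow> real \<Rightarrow> real" where "G0 m y = (y^2/4 - 1)^m"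
definition G1 :: "nat \<Rightarrow> real \<Rightarrow> real" where "G1 m y = real m * (y^2/4 - 1)^(m-1) * (y/2)"
definition G2 :: "nat \<Rightarrow> real \<Rightarrow> real" where
  "G2 m y = real m * real (m-1) * (y^2/4 - 1)^(m-2) * (y/2)^2 + real m * (y^2/4 - 1)^(m-1) / 2"

lemma G0_deriv: assumes "m \<ge> 1" shows "(G0 m has_real_derivative G1 m y) (at y)"
proof -
  have "((\<lambda>y. (y^2/4 - 1)^m) has_real_derivative (real m * (y^2/4 - 1)^(m-1) * (2 * y / 4))) (at y)"
    by (auto intro!: derivative_eq_intros)
  then show ?thesis unfolding G0_def G1_def by (simp add: field_simps)
qed

lemma G1_deriv: assumes "m \<ge> 2" shows "(G1 m has_real_derivative G2 m y) (at y)"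
proof -
  have e: "m - 1 - 1 = m - 2" by simp
  have "((\<lambda>y. real m * (y^2/4 - 1)^(m-1) * (y/2)) has_real_derivative
     (real m * (real (m-1) * (y^2/4 - 1)^(m-1-1) * (2 * y / 4)) * (y/2) + real m * (y^2/4 - 1)^(m-1) * (1/2))) (at y)"
    by (auto intro!: derivative_eq_intros)
  then show ?thesis unfolding G1_def G2_def e by (simp add: field_simps power2_eq_square)
qed

lemma G_cont: "continuous_on S (G0 m)" "continuous_on S (G1 m)" "continuous_on S (G2 m)"
  unfolding G0_def G1_def G2_def by (auto intro!: continuous_intros)

definition J :: "(real \<Rightarrow> real) \<Rightarrow> nat \<Rightarrow> real \<Rightarrow> real" where
  "J K n t = integral {-1..1} (\<lambda>x. fc n x * K (t - x))"

lemma J_deriv: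
  assumes d: "\<And>y. (K has_real_derivative K' y) (at y)" and c: "continuous_on UNIV K'"
  shows "(J K n has_real_derivative J K' n t) (at t)"
proof -
  have cK: "continuous_on UNIV K" using d by (meson DERIV_continuous continuous_at_imp_continuous_on)
  have "((\<lambda>t. integral (cbox (-1) 1) (\<lambda>x. fc n x * K (t - x))) has_field_derivative
        integral (cbox (-1) 1) (\<lambda>x. fc n x * K' (t - x))) (at t within UNIV)"
  proof (rule leibniz_rule_field_derivative)
    fix s x :: real
    have "((\<lambda>s. s - x) has_real_derivative 1) (at s)" by (auto intro!: derivative_eq_intros)
    from DERIV_chain2[OF d this] 
    show "((\<lambda>s. fc n x * K (s - x)) has_field_derivative fc n x * K' (s - x)) (at s within UNIV)"
      using DERIV_cmult by fastforce
  next
    fix s :: real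
    show "(\<lambda>x. fc n x * K (s - x)) integrable_on cbox (- 1) 1"
      unfolding cbox_interval
      by (intro integrable_continuous_real continuous_intros fc_cont continuous_on_compose2[OF cK]) auto
  next
    have c1: "continuous_on UNIV (\<lambda>p::real\<times>real. fc n (snd p))"
      by (rule continuous_on_compose2[OF fc_cont]) (auto intro: continuous_intros)
    have c2: "continuous_on UNIV (\<lambda>p::real\<times>real. K' (fst p - snd p))"
      by (rule continuous_on_compose2[OF c]) (auto intro!: continuous_on_diff continuous_on_fst continuous_on_snd continuous_on_id)
    have "continuous_on UNIV (\<lambda>p::real\<times>real. fc n (snd p) * K' (fst p - snd p))"
      using continuous_on_mult[OF c1 c2] .
    then show "continuous_on (UNIV \<times> cbox (- 1) 1) (\<lambda>(s, x). fc n x * K' (s - x))"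
      by (simp add: split_def) (meson continuous_on_subset subset_UNIV)
  qed auto
  then show ?thesis unfolding J_def cbox_interval by simp
qed

lemma sym_int:
  fixes F :: "real \<Rightarrow> real"
  assumes "continuous_on {-1..1} F"
  shows "integral {-1..1} F = integral {0..1} (\<lambda>x. F x + F (-x))"
proof -
  have i1: "F integrable_on {-1..1}" using assms by (rule integrable_continuous_real)
  have i2: "F integrable_on {0..1}" "F integrable_on {-1..0}"
    using integrable_on_subinterval[OF i1] by auto
  have "integral {-1..1} F = integral {-1..0} F + integral {0..1} F"
    using Henstock_Kurzweil_Integration.integral_combine[OF _ _ i1, of 0] by simp
  also have "integral {-1..0} F = integral {0..1} (\<lambda>x. F (-x))"
    using Henstock_Kurzweil_Integration.integral_reflect_real[of 1 0 "\<lambda>x. F (-x)"] by simp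
  also have "\<dots> + integral {0..1} F = integral {0..1} (\<lambda>x. F x + F (-x))"
  proof -
    have "(\<lambda>x. F (-x)) integrable_on {0..1}"
      using Henstock_Kurzweil_Integration.integrable_reflect_real[where f=F and a="-1" and b=0] i2 by simp
    then show ?thesis using integral_add[OF i2(1)] by simp
  qed
  finally show ?thesis .
qed

lemma J_sym:
  assumes "continuous_on UNIV K"
  shows "J K n t = integral {0..1} (\<lambda>x. fc n x * (K (t - x) - K (t + x)))"
proof -
  have "J K n t = integral {0..1} (\<lambda>x. fc n x * K (t - x) + fc n (-x) * K (t - - x))"
    unfolding J_def
    by (rule sym_int) (intro continuous_intros fc_cont continuous_on_compose2[OF assms]; auto)
  then show ?thesis by (simp add: fc_odd algebra_simps)
qed

lemma phi_G0: "phi n y = c_const n * (-1)^(n^2) * G0 (n^2) y"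
proof -
  have "(1 - y^2/4) = (-1) * (y^2/4 - 1)" by simp
  then have "(1 - y^2/4)^(n^2) = (-1)^(n^2) * (y^2/4 - 1)^(n^2)"
    by (metis power_mult_distrib)
  then show ?thesis unfolding phi_def G0_def by simp
qed

lemma phi_cont: "continuous_on S (phi n)"
  unfolding phi_def by (auto intro!: continuous_intros)

lemma P_J: assumes "n \<ge> 2" shows "P_fun n t = J (phi n) n t"
  unfolding P_fun_def J_def using f_eq_fc[OF assms] by simp

lemma J_lin: "J (\<lambda>y. a * K y) n t = a * J K n t"
  unfolding J_def by (simp add: mult.left_commute)

lemma P_J0: assumes "n \<ge> 2" shows "P_fun n t = c_const n * (-1)^(n^2) * J (G0 (n^2)) n t"
proof -
  have "P_fun n t = J (\<lambda>y. (c_const n * (-1)^(n^2)) * G0 (n^2) y) n t"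
    unfolding P_J[OF assms] phi_G0 ..
  then show ?thesis by (simp only: J_lin)
qed

lemma integrable_J: assumes "continuous_on UNIV K"
  shows "(\<lambda>x. fc n x * K (t - x)) integrable_on {a..b}"
  by (intro integrable_continuous_real continuous_intros fc_cont continuous_on_compose2[OF assms]) auto

lemma int_shift: "integral {-1..1} (\<lambda>x. K (t - x)) = integral {t-1..t+1} (K :: real \<Rightarrow> real)"
proof -
  have "integral {-1..1} (\<lambda>x. K (t - x)) = integral {-1..1} (\<lambda>x. K (t + x))"
    using Henstock_Kurzweil_Integration.integral_reflect_real[of 1 "-1" "\<lambda>x. K (t + x)"] by simp
  also have "\<dots> = integral {-1..1} (K \<circ> (+) t)" by (simp add: o_def)
  also have "\<dots> = integral {-1+t..1+t} K" by (rule integral_shift_Icc_real)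
  finally show ?thesis by (simp add: algebra_simps)
qed

definition I0 :: "nat \<Rightarrow> real" where "I0 n = integral {-2..2} (\<lambda>x. (1 - x\<^sup>2 / 4) ^ (n\<^sup>2))"

lemma base_nonneg: "\<bar>y\<bar> \<le> 2 \<Longrightarrow> 0 \<le> 1 - (y::real)^2/4"
proof -
  assume "\<bar>y\<bar> \<le> 2"
  then have "y^2 \<le> 2^2" by (metis abs_le_square_iff abs_numeral)
  then show ?thesis by simp
qed

lemma base_mono: "\<bar>y\<bar> \<le> \<bar>z\<bar> \<Longrightarrow> 1 - (z::real)^2/4 \<le> 1 - y^2/4"
proof -
  assume "\<bar>y\<bar> \<le> \<bar>z\<bar>"
  then have "y^2 \<le> z^2" by (metis abs_le_square_iff)
  then show ?thesis by simp
qed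

lemma I0_upper: "I0 n \<le> 4"
proof -
  have "I0 n \<le> integral {-2..2::real} (\<lambda>x. 1)"
    unfolding I0_def
  proof (rule integral_le)
    show "(\<lambda>x. (1 - x\<^sup>2 / 4) ^ n\<^sup>2) integrable_on {-2..2::real}"
      by (auto intro!: integrable_continuous_real continuous_intros)
    fix x :: real assume "x \<in> {-2..2}"
    then have "\<bar>x\<bar> \<le> 2" by auto
    then have "0 \<le> 1 - x^2/4" "1 - x^2/4 \<le> 1" using base_nonneg by auto
    then show "(1 - x\<^sup>2 / 4) ^ n\<^sup>2 \<le> 1" by (simp add: power_le_one)
  qed auto
  then show ?thesis by simp
qed

lemma I0_lower: assumes "n \<ge> 2" shows "I0 n \<ge> 3 / (2 * real n)"
proof -
  have n: "real n \<ge> 2" using assms by simp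
  let ?g = "\<lambda>x::real. (1 - x\<^sup>2 / 4) ^ n\<^sup>2"
  have ig: "?g integrable_on {a..b}" for a b by (auto intro!: integrable_continuous_real continuous_intros)
  have "integral {-1/real n..1/real n} (\<lambda>x. 3/4) \<le> integral {-1/real n..1/real n} ?g"
  proof (rule integral_le)
    fix x assume x: "x \<in> {-1/real n..1/real n}"
    then have ax: "\<bar>x\<bar> \<le> 1 / real n" by auto
    then have "x^2 \<le> (1/real n)^2" by (metis abs_le_square_iff abs_of_nonneg divide_nonneg_nonneg of_nat_0_le_iff zero_le_one)
    then have x2: "real (n^2) * x^2 \<le> 1" using n by (simp add: field_simps)
    have "-1 \<le> -(x^2/4)"
    proof -
      have "x^2 \<le> 1" using x2 n
        by (smt (verit, best) \<open>x\<^sup>2 \<le> (1 / real n)\<^sup>2\<close> divide_le_eq_1 le_divide_eq_1_pos one_power2 power_mono zero_le_divide_1_iff)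
      then show ?thesis by simp
    qed
    from Bernoulli_inequality[OF this, of "n^2"]
    have "1 + real (n^2) * (-(x^2/4)) \<le> (1 - x^2/4)^(n^2)" by simp
    moreover have "1 + real (n^2) * (-(x^2/4)) \<ge> 3/4" using x2 by simp
    ultimately show "3/4 \<le> ?g x" by simp
  qed (auto intro: ig)
  also have "\<dots> \<le> I0 n" unfolding I0_def
  proof (rule integral_subset_le)
    show "{- 1 / real n..1 / real n} \<subseteq> {- 2..2}" using n by (auto simp: field_simps)
    show "\<forall>x\<in>{- 2..2}. 0 \<le> ?g x"
      using base_nonneg by auto
  qed (auto intro: ig)
  finally have "3/4 * (2 / real n) \<le> I0 n" using n by simp
  then show ?thesis by (simp add: field_simps)
qed

lemma c_bounds: assumes "n \<ge> 2" shows "c_const n \<ge> 1/4" "c_const n \<le> 2 * real n / 3" "c_const n > 0"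
proof -
  have n: "real n \<ge> 2" using assms by simp
  have l: "I0 n \<ge> 3 / (2 * real n)" using I0_lower[OF assms] .
  have p: "I0 n > 0" using l n by (smt (verit) divide_pos_pos)
  have c: "c_const n = 1 / I0 n" unfolding c_const_def I0_def ..
  show "c_const n \<ge> 1/4" unfolding c using I0_upper[of n] p by (simp add: field_simps)
  show "c_const n > 0" unfolding c using p by simp
  have "1 / I0 n \<le> 1 / (3 / (2 * real n))" using l n p by (intro divide_left_mono) (auto intro!: mult_pos_pos)
  then show "c_const n \<le> 2 * real n / 3" unfolding c by simp
qed

lemma phi_int: assumes "n \<ge> 2" shows "integral {-2..2} (phi n) = 1"
proof -
  have n: "real n \<ge> 2" using assms by simp
  have p: "I0 n > 0" using I0_lower[OF assms] n by (smt (verit) divide_pos_pos)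
  have "integral {-2..2} (phi n) = c_const n * I0 n"
    unfolding phi_def I0_def by simp
  then show ?thesis unfolding c_const_def I0_def[symmetric] using p by simp
qed

lemma phi_nonneg: assumes "n \<ge> 2" "\<bar>y\<bar> \<le> 2" shows "phi n y \<ge> 0"
  unfolding phi_def using c_bounds[OF assms(1)] base_nonneg[OF assms(2)] by simp

lemma phi_mono: assumes "n \<ge> 2" "\<bar>y\<bar> \<le> \<bar>z\<bar>" "\<bar>z\<bar> \<le> 2" shows "phi n z \<le> phi n y"
  unfolding phi_def using c_bounds[OF assms(1)] base_nonneg[OF assms(3)] base_mono[OF assms(2)]
  by (intro mult_left_mono power_mono) auto

lemma phi_even: "phi n (-y) = phi n y" unfolding phi_def by simp

lemma P_sym: assumes "n \<ge> 2"
  shows "P_fun n t = integral {0..1} (\<lambda>x. fc n x * (phi n (t - x) - phi n (t + x)))"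
  unfolding P_J[OF assms] by (rule J_sym[OF phi_cont])

lemma P_odd: assumes "n \<ge> 2" shows "P_fun n (-t) = - P_fun n t"
proof -
  have "P_fun n (-t) = integral {0..1} (\<lambda>x. - (fc n x * (phi n (t - x) - phi n (t + x))))"
    unfolding P_sym[OF assms]
  proof (rule arg_cong[where f="integral _"], rule ext)
    fix x
    have "phi n (- t - x) = phi n (t + x)" using phi_even[of n "t + x"] by (simp add: algebra_simps)
    moreover have "phi n (- t + x) = phi n (t - x)" using phi_even[of n "t - x"] by (simp add: algebra_simps)
    ultimately show "fc n x * (phi n (- t - x) - phi n (- t + x)) = - (fc n x * (phi n (t - x) - phi n (t + x)))"
      by (simp add: algebra_simps)
  qed
  then show ?thesis unfolding P_sym[OF assms] by simp
qed

lemma P_nonneg: assumes "n \<ge> 2" "0 \<le> t" "t \<le> 1" shows "P_fun n t \<ge> 0"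
  unfolding P_sym[OF assms(1)]
proof (rule integral_nonneg)
  show "(\<lambda>x. fc n x * (phi n (t - x) - phi n (t + x))) integrable_on {0..1}"
    by (intro integrable_continuous_real continuous_intros fc_cont continuous_on_compose2[OF phi_cont]) auto
  fix x assume x: "x \<in> {0..1::real}"
  have "phi n (t + x) \<le> phi n (t - x)" using x assms by (intro phi_mono) auto
  then show "0 \<le> fc n x * (phi n (t - x) - phi n (t + x))"
    using fc_nonneg[OF assms(1), of x] x by simp
qed

lemma int_phi_window: assumes "n \<ge> 2"
  shows "integral {-1..1} (\<lambda>x. phi n (t - x)) = integral {t-1..t+1} (phi n)"
  by (rule int_shift)

lemma phi_integrable: "phi n integrable_on {a..b}"
  by (intro integrable_continuous_real phi_cont)

lemma P_le1: assumes "n \<ge> 2" "0 \<le> t" "t \<le> 1" shows "P_fun n t \<le> 1"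
proof -
  have "P_fun n t \<le> integral {-1..1} (\<lambda>x. phi n (t - x))"
    unfolding P_J[OF assms(1)] J_def
  proof (rule integral_le)
    show "(\<lambda>x. fc n x * phi n (t - x)) integrable_on {-1..1}" by (rule integrable_J[OF phi_cont])
    show "(\<lambda>x. phi n (t - x)) integrable_on {-1..1}"
      by (intro integrable_continuous_real continuous_intros continuous_on_compose2[OF phi_cont]) auto
    fix x assume x: "x \<in> {-1..1::real}"
    have "phi n (t - x) \<ge> 0" using x assms by (intro phi_nonneg) auto
    then show "fc n x * phi n (t - x) \<le> phi n (t - x)"
      using fc_bound[OF assms(1), of x] mult_right_mono[of "fc n x" 1 "phi n (t - x)"] by simp
  qed
  also have "\<dots> = integral {t-1..t+1} (phi n)" by (rule int_shift)
  also have "\<dots> \<le> integral {-2..2} (phi n)"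
    by (rule integral_subset_le) (use assms in \<open>auto intro!: phi_integrable phi_nonneg\<close>)
  also have "\<dots> = 1" by (rule phi_int[OF assms(1)])
  finally show ?thesis .
qed

lemma exp_big: assumes "real n \<ge> 512" shows "8 * real n \<le> exp (real n / 4)"
proof -
  have "exp (real n / 4) = exp (real n / 8)^2" by (simp add: exp_double[symmetric] power2_eq_square exp_add[symmetric])
  moreover have "real n / 8 \<le> exp (real n / 8)" using exp_ge_add_one_self[of "real n / 8"] by linarith
  then have "(real n / 8)^2 \<le> exp (real n / 8)^2" by (intro power_mono) auto
  moreover have "8 * real n \<le> (real n / 8)^2" using assms by (simp add: power2_eq_square field_simps)
  ultimately show ?thesis by linarith
qed

lemma k0_small: assumes "n \<ge> 1000"
  shows "c_const n * (1 - (1 / sqrt (real n))^2 / 4)^(n^2) \<le> 1/12"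
proof -
  have n: "real n \<ge> 1000" using assms by simp
  have s: "(1 / sqrt (real n))^2 = 1 / real n" using n by (simp add: power_divide)
  have u: "0 \<le> 1 - 1 / (4 * real n)" using n by (simp add: field_simps)
  have "(1 - 1 / (4 * real n))^(n^2) \<le> exp (- (1 / (4 * real n)))^(n^2)"
    using exp_ge_add_one_self[of "- (1 / (4 * real n))"] u by (intro power_mono) auto
  also have "\<dots> = exp (- real n / 4)"
    unfolding exp_of_nat_mult[symmetric] using n by (simp add: power2_eq_square field_simps)
  finally have e: "(1 - 1 / (4 * real n))^(n^2) \<le> exp (- real n / 4)" .
  have "c_const n * (1 - 1 / (4 * real n))^(n^2) \<le> (2 * real n / 3) * exp (- real n / 4)"
    using c_bounds[of n] assms e u by (intro mult_mono) auto
  also have "\<dots> \<le> 1/12"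
  proof -
    have "8 * real n \<le> exp (real n / 4)" using exp_big n by simp
    then have "8 * real n * exp (- real n / 4) \<le> 1"
      by (simp add: exp_minus field_simps)
    then show ?thesis by simp
  qed
  finally show ?thesis unfolding s by (simp add: field_simps)
qed

lemma P_good:
  assumes n: "n \<ge> 1000" and t: "2 / sqrt (real n) \<le> t" "t \<le> 1/2"
  shows "P_fun n t \<ge> 1/2"
proof -
  define d where "d = 1 / sqrt (real n)"
  define k0 where "k0 = phi n d"
  have n2: "n \<ge> 2" using n by simp
  have rn: "real n \<ge> 1000" using n by simp
  have sq: "sqrt (real n) \<ge> 4" using rn real_sqrt_le_mono[of 16 "real n"] by simp
  have dpos: "d > 0" unfolding d_def using sq rn by simp
  have d14: "d \<le> 1/4" unfolding d_def using sq rn by (intro divide_left_mono) auto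
  have sqle: "sqrt (real n) \<le> real n"
    using rn by (intro real_le_lsqrt) (auto simp: power2_eq_square)
  have dn: "1 / real n \<le> d" unfolding d_def using sq sqle by (intro divide_left_mono) auto
  have t2: "2 * d \<le> t" using t unfolding d_def by simp
  have k0s: "k0 \<le> 1/12" unfolding k0_def d_def phi_def using k0_small[OF n] .
  have k0n: "k0 \<ge> 0" unfolding k0_def using d14 dpos by (intro phi_nonneg[OF n2]) auto
  have kb: "phi n y \<le> k0" if "d \<le> \<bar>y\<bar>" "\<bar>y\<bar> \<le> 2" for y
    unfolding k0_def using that dpos by (intro phi_mono[OF n2]) auto
  have step1: "P_fun n t \<ge> integral {-1..1} (\<lambda>x. phi n (t - x) - 2 * k0)"
    unfolding P_J[OF n2] J_def
  proof (rule integral_le)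
    show "(\<lambda>x. fc n x * phi n (t - x)) integrable_on {-1..1}" by (rule integrable_J[OF phi_cont])
    show "(\<lambda>x. phi n (t - x) - 2 * k0) integrable_on {-1..1}"
      by (intro integrable_continuous_real continuous_intros continuous_on_compose2[OF phi_cont]) auto
    fix x assume x: "x \<in> {-1..1::real}"
    have p0: "phi n (t - x) \<ge> 0" using x t dpos t2 by (intro phi_nonneg[OF n2]) auto
    show "phi n (t - x) - 2 * k0 \<le> fc n x * phi n (t - x)"
    proof (cases "\<bar>t - x\<bar> \<le> d")
      case True
      have "x \<ge> t - d" "x \<le> t + d" using True by (auto simp: abs_le_iff)
      then have "1 / real n \<le> x" "x \<le> 1 - 1 / real n" using t2 d14 dn t by linarith+
      then have "fc n x = 1" by (intro fc_one[OF n2])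
      then show ?thesis using k0n by simp
    next
      case False
      have "phi n (t - x) \<le> k0" using False x t2 dpos t by (intro kb) auto
      moreover have "- phi n (t - x) \<le> fc n x * phi n (t - x)"
        using fc_bound[OF n2, of x] p0 mult_right_mono[of "-1" "fc n x" "phi n (t - x)"] by simp
      ultimately show ?thesis by linarith
    qed
  qed
  have i1: "integral {-1..1} (\<lambda>x. phi n (t - x) - 2 * k0) = integral {t-1..t+1} (phi n) - 4 * k0"
  proof -
    have "integral {-1..1} (\<lambda>x. phi n (t - x) - 2 * k0) = integral {-1..1} (\<lambda>x. phi n (t - x)) - integral {-1..1::real} (\<lambda>x. 2 * k0)"
      by (rule integral_diff) (auto intro!: integrable_continuous_real continuous_intros continuous_on_compose2[OF phi_cont])
    then show ?thesis using int_shift[of "phi n" t] by simp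
  qed
  have step2: "integral {t-1..t+1} (phi n) \<ge> 1 - 2 * k0"
  proof -
    have c1: "integral {-2..t-1} (phi n) + integral {t-1..2} (phi n) = integral {-2..2} (phi n)"
      using t t2 dpos by (intro Henstock_Kurzweil_Integration.integral_combine phi_integrable) auto
    have c2: "integral {t-1..t+1} (phi n) + integral {t+1..2} (phi n) = integral {t-1..2} (phi n)"
      using t t2 dpos by (intro Henstock_Kurzweil_Integration.integral_combine phi_integrable) auto
    have b1: "integral {-2..t-1} (phi n) \<le> integral {-2..t-1} (\<lambda>x. k0)"
      using t d14 by (intro integral_le phi_integrable kb) auto
    have b2: "integral {t+1..2} (phi n) \<le> integral {t+1..2} (\<lambda>x. k0)"
      using t d14 t2 dpos by (intro integral_le phi_integrable kb) auto
    have "integral {-2..t-1} (\<lambda>x. k0) = k0 * (t + 1)" using t t2 dpos by simp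
    moreover have "integral {t+1..2} (\<lambda>x. k0) = k0 * (1 - t)" using t by simp
    moreover have "k0 * (t + 1) + k0 * (1 - t) = 2 * k0" by (simp add: algebra_simps)
    ultimately show ?thesis using c1 c2 b1 b2 phi_int[OF n2] by linarith
  qed
  show ?thesis using step1 i1 step2 k0s by linarith
qed

definition dphi :: "nat \<Rightarrow> real \<Rightarrow> real" where
  "dphi n y = c_const n * real (n^2) * (1 - y^2/4)^(n^2 - 1) * (- y / 2)"

lemma phi_deriv: assumes "n \<ge> 1" shows "(phi n has_real_derivative dphi n y) (at y)"
proof -
  have "((\<lambda>y. c_const n * (1 - y^2/4)^(n^2)) has_real_derivative
     c_const n * (real (n^2) * (1 - y^2/4)^(n^2 - 1) * (- (2 * y / 4)))) (at y)"
    by (auto intro!: derivative_eq_intros)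
  then show ?thesis unfolding phi_def dphi_def by (simp add: field_simps)
qed

lemma dphi_cont: "continuous_on S (dphi n)"
  unfolding dphi_def by (auto intro!: continuous_intros)

lemma dphi_bound: assumes "n \<ge> 2" "\<bar>y\<bar> \<le> 2" shows "\<bar>dphi n y\<bar> \<le> c_const n * real (n^2)"
proof -
  have b: "0 \<le> 1 - y^2/4" using base_nonneg[OF assms(2)] .
  have b1: "1 - y^2/4 \<le> 1" by simp
  have p: "(1 - y^2/4)^(n^2 - 1) \<le> 1" using b b1 by (simp add: power_le_one)
  have pn: "0 \<le> (1 - y^2/4)^(n^2 - 1)" using b by simp
  have y: "\<bar>- y / 2\<bar> \<le> 1" using assms by simp
  have c: "c_const n > 0" using c_bounds[OF assms(1)] by simp
  have "\<bar>dphi n y\<bar> = c_const n * real (n^2) * ((1 - y^2/4)^(n^2 - 1) * \<bar>- y / 2\<bar>)"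
    unfolding dphi_def using c pn by (simp add: abs_mult)
  also have "\<dots> \<le> c_const n * real (n^2) * (1 * 1)"
    using c p pn y by (intro mult_left_mono mult_mono) auto
  finally show ?thesis by simp
qed

lemma P_fun_eq: assumes "n \<ge> 2" shows "P_fun n = J (phi n) n"
  using P_J[OF assms] by auto

lemma P_deriv: assumes "n \<ge> 2" shows "(P_fun n has_real_derivative J (dphi n) n t) (at t)"
  unfolding P_fun_eq[OF assms] using assms by (intro J_deriv phi_deriv dphi_cont) auto

lemma P_zero: assumes "n \<ge> 2" shows "P_fun n 0 = 0"
  using P_odd[OF assms, of 0] by simp

lemma J_dphi_bound: assumes "n \<ge> 2" "0 \<le> t" "t \<le> 1"
  shows "J (dphi n) n t \<le> 2 * (c_const n * real (n^2))"
proof -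
  let ?M = "c_const n * real (n^2)"
  have "J (dphi n) n t \<le> integral {-1..1::real} (\<lambda>x. ?M)"
    unfolding J_def
  proof (rule integral_le)
    show "(\<lambda>x. fc n x * dphi n (t - x)) integrable_on {-1..1}" by (rule integrable_J[OF dphi_cont])
    fix x assume x: "x \<in> {-1..1::real}"
    have "\<bar>dphi n (t - x)\<bar> \<le> ?M" using x assms by (intro dphi_bound) auto
    moreover have "\<bar>fc n x\<bar> \<le> 1" by (rule fc_bound[OF assms(1)])
    ultimately have "\<bar>fc n x * dphi n (t - x)\<bar> \<le> 1 * ?M"
      unfolding abs_mult by (intro mult_mono) auto
    then show "fc n x * dphi n (t - x) \<le> ?M" by simp
  qed auto
  then show ?thesis by simp
qed

lemma P_lin: assumes "n \<ge> 2" "0 \<le> t" "t \<le> 1"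
  shows "P_fun n t \<le> 2 * (c_const n * real (n^2)) * t"
proof -
  let ?M = "2 * (c_const n * real (n^2))"
  have "(\<lambda>s. ?M * s - P_fun n s) 0 \<le> (\<lambda>s. ?M * s - P_fun n s) t"
  proof (rule DERIV_nonneg_imp_nondecreasing[OF assms(2)])
    fix s assume s: "0 \<le> s" "s \<le> t"
    have "((\<lambda>s. ?M * s - P_fun n s) has_real_derivative ?M * 1 - J (dphi n) n s) (at s)"
      using DERIV_diff[OF DERIV_cmult_Id[of ?M s] P_deriv[OF assms(1)]] by simp
    moreover have "?M * 1 - J (dphi n) n s \<ge> 0" using J_dphi_bound[OF assms(1), of s] s assms by simp
    ultimately show "\<exists>y. ((\<lambda>s. ?M * s - P_fun n s) has_real_derivative y) (at s) \<and> 0 \<le> y" by blast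
  qed
  then show ?thesis using P_zero[OF assms(1)] by simp
qed

lemma q_facts: assumes "2 \<le> a" "a \<le> b" shows "0 \<le> a^2/4 - 1" "a^2/4 - 1 \<le> b^2/4 - (1::real)"
proof -
  have "2^2 \<le> a^2" using assms by (intro power_mono) auto
  then show "0 \<le> a^2/4 - 1" by simp
  have "a^2 \<le> b^2" using assms by (intro power_mono) auto
  then show "a^2/4 - 1 \<le> b^2/4 - (1::real)" by simp
qed

lemma G1_mono: assumes "2 \<le> a" "a \<le> b" shows "G1 m a \<le> G1 m b"
proof -
  note q = q_facts[OF assms]
  have qb: "0 \<le> (b^2/4 - 1)^(m-1)" using q by simp
  have "(a^2/4 - 1)^(m-1) \<le> (b^2/4 - 1)^(m-1)" using q by (intro power_mono) auto
  moreover have "a / 2 \<le> b / 2" using assms by simp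
  ultimately have "(a^2/4 - 1)^(m-1) * (a/2) \<le> (b^2/4 - 1)^(m-1) * (b/2)"
    using q qb assms by (intro mult_mono) auto
  then show ?thesis unfolding G1_def by (simp add: mult.assoc mult_left_mono)
qed

lemma G2_mono: assumes "2 \<le> a" "a \<le> b" shows "G2 m a \<le> G2 m b"
proof -
  note q = q_facts[OF assms]
  have qb: "0 \<le> (b^2/4 - 1)^(m-2)" using q by simp
  have "(a^2/4 - 1)^(m-2) \<le> (b^2/4 - 1)^(m-2)" using q by (intro power_mono) auto
  moreover have "(a / 2)^2 \<le> (b / 2)^2" using assms by (intro power_mono) auto
  ultimately have 1: "(a^2/4 - 1)^(m-2) * (a/2)^2 \<le> (b^2/4 - 1)^(m-2) * (b/2)^2"
    using q qb assms by (intro mult_mono) auto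
  have 2: "(a^2/4 - 1)^(m-1) \<le> (b^2/4 - 1)^(m-1)" using q by (intro power_mono) auto
  have "real m * real (m-1) * ((a^2/4 - 1)^(m-2) * (a/2)^2) \<le> real m * real (m-1) * ((b^2/4 - 1)^(m-2) * (b/2)^2)"
    using 1 by (intro mult_left_mono) auto
  moreover have "real m * (a^2/4 - 1)^(m-1) / 2 \<le> real m * (b^2/4 - 1)^(m-1) / 2"
    using 2 by (intro divide_right_mono mult_left_mono) auto
  ultimately show ?thesis unfolding G2_def by (simp add: mult.assoc)
qed

lemma G1_step: assumes "3 \<le> a" shows "G1 m (a + 1) \<ge> G1 m a + real m / 2"
proof -
  have q: "0 \<le> a^2/4 - 1" "a^2/4 - 1 \<le> (a+1)^2/4 - (1::real)" using q_facts[of a "a+1"] assms by auto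
  have q1: "1 \<le> a^2/4 - 1"
  proof -
    have "3^2 \<le> a^2" using assms by (intro power_mono) auto
    then show ?thesis by simp
  qed
  have pw: "1 \<le> (a^2/4 - 1)^(m-1)" using q1 by (simp add: one_le_power)
  have mono: "(a^2/4 - 1)^(m-1) \<le> ((a+1)^2/4 - 1)^(m-1)" using q by (intro power_mono) auto
  have "G1 m (a + 1) \<ge> real m * (a^2/4 - 1)^(m-1) * ((a+1)/2)"
    unfolding G1_def using mono assms by (intro mult_right_mono mult_left_mono) auto
  moreover have "real m * (a^2/4 - 1)^(m-1) * ((a+1)/2) = G1 m a + real m * (a^2/4 - 1)^(m-1) / 2"
    unfolding G1_def by (simp add: field_simps)
  moreover have "real m * (a^2/4 - 1)^(m-1) / 2 \<ge> real m / 2"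
    using pw by (simp add: divide_right_mono mult_le_cancel_left1)
  ultimately show ?thesis by linarith
qed

lemma J1_bound: assumes n: "n \<ge> 4" and t: "t \<ge> 4"
  shows "J (G1 (n^2)) n t \<le> - real (n^2) / 8"
proof -
  have n2: "n \<ge> 2" using n by simp
  define F where "F x = fc n x * (G1 (n^2) (t + x) - G1 (n^2) (t - x))" for x
  have J: "J (G1 (n^2)) n t = - integral {0..1} F"
    unfolding J_sym[OF G_cont(2)] F_def
    by (simp add: algebra_simps flip: integral_neg)
  have iF: "F integrable_on {a..b}" for a b unfolding F_def
    by (intro integrable_continuous_real continuous_intros fc_cont continuous_on_compose2[OF G_cont(2)]) auto
  have "integral {1/2..3/4} F \<le> integral {0..1} F"
  proof (rule integral_subset_le)
    show "\<forall>x\<in>{0..1}. 0 \<le> F x"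
    proof
      fix x :: real assume x: "x \<in> {0..1}"
      have "G1 (n^2) (t - x) \<le> G1 (n^2) (t + x)" using x t by (intro G1_mono) auto
      then show "0 \<le> F x" unfolding F_def using fc_nonneg[OF n2, of x] x by simp
    qed
  qed (auto intro: iF)
  moreover have "integral {1/2..3/4::real} (\<lambda>x. real (n^2) / 2) \<le> integral {1/2..3/4} F"
  proof (rule integral_le)
    fix x :: real assume x: "x \<in> {1/2..3/4}"
    have rn: "real n \<ge> 4" using n by simp
    have "1 / real n \<le> 1/4" using rn by (intro divide_left_mono) auto
    then have "1 / real n \<le> x" "x \<le> 1 - 1 / real n" using x by auto
    then have "fc n x = 1" by (intro fc_one[OF n2])
    moreover have "G1 (n^2) (t - x) + real (n^2) / 2 \<le> G1 (n^2) ((t - x) + 1)"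
      using x t by (intro G1_step) auto
    moreover have "G1 (n^2) ((t - x) + 1) \<le> G1 (n^2) (t + x)" using x t by (intro G1_mono) auto
    ultimately show "real (n^2) / 2 \<le> F x" unfolding F_def by simp
  qed (auto intro: iF)
  moreover have "integral {1/2..3/4::real} (\<lambda>x. real (n^2) / 2) = real (n^2) / 8" by simp
  ultimately show ?thesis unfolding J by linarith
qed

lemma J2_bound: assumes n: "n \<ge> 2" and t: "t \<ge> 4"
  shows "J (G2 (n^2)) n t \<le> 0"
proof -
  have "integral {0..1} (\<lambda>x. fc n x * (G2 (n\<^sup>2) (t - x) - G2 (n\<^sup>2) (t + x))) \<le> integral {0..1::real} (\<lambda>x. 0)"
  proof (rule integral_le)
    show "(\<lambda>x. fc n x * (G2 (n\<^sup>2) (t - x) - G2 (n\<^sup>2) (t + x))) integrable_on {0..1}"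
      by (intro integrable_continuous_real continuous_intros fc_cont continuous_on_compose2[OF G_cont(3)]) auto
    fix x :: real assume x: "x \<in> {0..1}"
    have "G2 (n^2) (t - x) \<le> G2 (n^2) (t + x)" using x t by (intro G2_mono) auto
    then show "fc n x * (G2 (n\<^sup>2) (t - x) - G2 (n\<^sup>2) (t + x)) \<le> 0"
      using fc_nonneg[OF n, of x] x by (simp add: mult_nonneg_nonpos)
  qed auto
  then show ?thesis unfolding J_sym[OF G_cont(3)] by simp
qed

lemma mono_bdd_lim:
  fixes W :: "real \<Rightarrow> real"
  assumes mono: "\<And>x y. a \<le> x \<Longrightarrow> x \<le> y \<Longrightarrow> W x \<le> W y"
    and bdd: "\<And>x. a \<le> x \<Longrightarrow> W x \<le> B"
  shows "(W \<longlongrightarrow> (SUP x\<in>{a..}. W x)) at_top"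
proof (rule increasing_tendsto)
  have ba: "bdd_above (W ` {a..})" using bdd by (intro bdd_aboveI2[where M=B]) auto
  show "\<forall>\<^sub>F n in at_top. W n \<le> (SUP x\<in>{a..}. W x)"
    using eventually_ge_at_top[of a] by eventually_elim (auto intro: cSUP_upper ba)
  fix l assume l: "l < (SUP x\<in>{a..}. W x)"
  then obtain y where y: "y \<in> {a..}" "l < W y" using less_cSUP_iff[of "{a..}" W l] ba by auto
  show "\<forall>\<^sub>F n in at_top. l < W n"
    using eventually_ge_at_top[of y] by eventually_elim (use y mono in \<open>fastforce\<close>)
qed

lemma tail_abstract:
  fixes Q dQ dQ2 :: "real \<Rightarrow> real"
  assumes s: "s > 0"
    and d1: "\<And>t. t \<ge> s \<Longrightarrow> (Q has_real_derivative dQ t) (at t)"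
    and d2: "\<And>t. t \<ge> s \<Longrightarrow> (dQ has_real_derivative dQ2 t) (at t)"
    and c2: "continuous_on {s..} dQ2"
    and k: "k > 0" "\<And>t. t \<ge> s \<Longrightarrow> dQ t \<ge> k"
    and p2: "\<And>t. t \<ge> s \<Longrightarrow> dQ2 t \<ge> 0"
    and cs: "cos (Q s) = 1"
  shows "\<exists>B. ((\<lambda>R. integral {s..R} (\<lambda>t. sin (Q t) / t)) \<longlongrightarrow> B) at_top \<and> B \<ge> 0"
proof -
  define H where "H t = inverse (t * dQ t)" for t
  define H' where "H' t = - ((1 * dQ t + dQ2 t * t) * inverse ((t * dQ t) ^ Suc (Suc 0)))" for t
  define w where "w t = (cos (Q t) - 1) * H' t" for t
  have pos: "t * dQ t > 0" if "t \<ge> s" for t using that s k by (smt (verit) mult_pos_pos)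
  have dH: "(H has_real_derivative H' t) (at t)" if "t \<ge> s" for t
    unfolding H_def H'_def
    by (rule DERIV_inverse_fun[OF DERIV_mult[OF DERIV_ident d2[OF that]]]) (use pos[OF that] in auto)
  have H'le: "H' t \<le> 0" if "t \<ge> s" for t
    unfolding H'_def using pos[OF that] k(2)[OF that] p2[OF that] that s k(1)
    by (auto intro!: mult_nonneg_nonneg)
  have Hpos: "H t > 0" if "t \<ge> s" for t unfolding H_def by (rule positive_imp_inverse_positive[OF pos[OF that]])
  have Hle: "H t \<le> inverse (t * k)" if "t \<ge> s" for t
    unfolding H_def using pos[OF that] k that s by (intro le_imp_inverse_le mult_left_mono) auto
  have wnn: "w t \<ge> 0" if "t \<ge> s" for t
    unfolding w_def using H'le[OF that] by (intro mult_nonpos_nonpos) auto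
  have wle: "w t \<le> -2 * H' t" if "t \<ge> s" for t
  proof -
    have "(cos (Q t) - 1) \<ge> -2" using cos_ge_minus_one[of "Q t"] by linarith
    then have "(cos (Q t) - 1) * H' t \<le> (-2) * H' t" using H'le[OF that] by (intro mult_right_mono_neg) auto
    then show ?thesis unfolding w_def by simp
  qed
  have cQ: "continuous_on {s..} Q"
    using d1 by (intro continuous_at_imp_continuous_on ballI DERIV_continuous) auto
  have cdQ: "continuous_on {s..} dQ"
    using d2 by (intro continuous_at_imp_continuous_on ballI DERIV_continuous) auto
  have cH': "continuous_on {s..} H'"
  proof -
    have nz: "dQ t \<noteq> 0" "t \<noteq> 0" if "t \<in> {s..}" for t using that k s by (smt (verit) atLeast_iff)+
    show ?thesis unfolding H'_def using nz by (intro continuous_intros cdQ c2) auto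
  qed
  have cw: "continuous_on {s..} w" unfolding w_def
    by (intro continuous_intros cH' continuous_on_compose2[OF continuous_on_cos cQ]) auto
  have cw': "continuous_on {s..R} w" for R by (rule continuous_on_subset[OF cw]) auto
  have cH'': "continuous_on {s..R} H'" for R by (rule continuous_on_subset[OF cH']) auto
  have iw: "w integrable_on {a..b}" if "s \<le> a" for a b
    using continuous_on_subset[OF cw, of "{a..b}"] that by (intro integrable_continuous_real) auto
  have key: "integral {s..R} (\<lambda>t. sin (Q t) / t) = (1 - cos (Q R)) * H R + integral {s..R} w"
    if R: "R \<ge> s" for R
  proof -
    define F where "F t = (1 - cos (Q t)) * H t" for t
    have dF: "(F has_real_derivative (sin (Q t) / t - w t)) (at t)" if "t \<ge> s" for t
    proof -
      have "(F has_real_derivative (sin (Q t) * dQ t) * H t + (1 - cos (Q t)) * H' t) (at t)"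
        unfolding F_def using d1[OF that] dH[OF that]
        by (auto intro!: derivative_eq_intros)
      moreover have "(sin (Q t) * dQ t) * H t = sin (Q t) / t"
      proof -
        have "dQ t \<noteq> 0" "t \<noteq> 0" using pos[OF that] by auto
        then show ?thesis unfolding H_def by (simp add: field_simps)
      qed
      ultimately show ?thesis unfolding w_def by (simp add: algebra_simps)
    qed
    have "((\<lambda>t. sin (Q t) / t - w t) has_integral (F R - F s)) {s..R}"
      using R dF by (intro fundamental_theorem_of_calculus)
        (auto simp: has_real_derivative_iff_has_vector_derivative[symmetric] intro: DERIV_subset)
    moreover have "F s = 0" unfolding F_def cs by simp
    ultimately have "((\<lambda>t. sin (Q t) / t - w t) has_integral F R) {s..R}" by simp
    moreover have "(w has_integral integral {s..R} w) {s..R}" using iw[of s R] by auto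
    ultimately have "((\<lambda>t. (sin (Q t) / t - w t) + w t) has_integral F R + integral {s..R} w) {s..R}"
      by (rule has_integral_add)
    then show ?thesis unfolding F_def by (simp add: integral_unique)
  qed
  define W where "W R = integral {s..R} w" for R
  have Wmono: "W x \<le> W y" if "s \<le> x" "x \<le> y" for x y
  proof -
    have "W y = W x + integral {x..y} w"
      unfolding W_def using that iw[of s y]
      by (intro Henstock_Kurzweil_Integration.integral_combine[symmetric]) auto
    moreover have "integral {x..y} w \<ge> 0" using that by (intro integral_nonneg iw wnn) auto
    ultimately show ?thesis by simp
  qed
  have Wbdd: "W x \<le> 2 * H s" if "s \<le> x" for x
  proof -
    have "W x \<le> integral {s..x} (\<lambda>t. -2 * H' t)"
      unfolding W_def using that
      by (intro integral_le iw wle integrable_continuous_real continuous_intros cH'') auto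
    also have "integral {s..x} (\<lambda>t. -2 * H' t) = -2 * (H x - H s)"
    proof -
      have "(H' has_integral (H x - H s)) {s..x}"
        using that dH by (intro fundamental_theorem_of_calculus)
          (auto simp: has_real_derivative_iff_has_vector_derivative[symmetric] intro: DERIV_subset)
      then show ?thesis by (simp add: integral_unique)
    qed
    also have "\<dots> \<le> 2 * H s" using Hpos[OF that] by simp
    finally show ?thesis .
  qed
  define Wl where "Wl = (SUP x\<in>{s..}. W x)"
  have Wlim: "(W \<longlongrightarrow> Wl) at_top" unfolding Wl_def by (rule mono_bdd_lim[OF Wmono Wbdd])
  have Hlim: "(H \<longlongrightarrow> 0) at_top"
  proof (rule tendsto_sandwich[of "\<lambda>_. 0" _ _ "\<lambda>t. inverse (t * k)"])
    show "\<forall>\<^sub>F t in at_top. 0 \<le> H t" using eventually_ge_at_top[of s] by eventually_elim (use Hpos in \<open>auto intro: less_imp_le\<close>)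
    show "\<forall>\<^sub>F t in at_top. H t \<le> inverse (t * k)" using eventually_ge_at_top[of s] by eventually_elim (use Hle in auto)
    show "((\<lambda>t. inverse (t * k)) \<longlongrightarrow> 0) at_top"
      using k(1) by (intro tendsto_inverse_0_at_top filterlim_at_top_mult_tendsto_pos[OF tendsto_const _ filterlim_ident]) auto
  qed auto
  have lim2: "((\<lambda>R. (1 - cos (Q R)) * H R) \<longlongrightarrow> 0) at_top"
  proof (rule tendsto_sandwich[of "\<lambda>_. 0" _ _ "\<lambda>t. 2 * H t"])
    show "\<forall>\<^sub>F t in at_top. 0 \<le> (1 - cos (Q t)) * H t"
      using eventually_ge_at_top[of s]
    proof eventually_elim
      case (elim t)
      have "0 \<le> 1 - cos (Q t)" using cos_le_one[of "Q t"] by simp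
      then show ?case using Hpos[OF elim] by simp
    qed
    show "\<forall>\<^sub>F t in at_top. (1 - cos (Q t)) * H t \<le> 2 * H t"
      using eventually_ge_at_top[of s]
    proof eventually_elim
      case (elim t)
      have "1 - cos (Q t) \<le> 2" using cos_ge_minus_one[of "Q t"] by simp
      then show ?case using Hpos[OF elim] by (intro mult_right_mono) auto
    qed
    show "((\<lambda>t. 2 * H t) \<longlongrightarrow> 0) at_top" using tendsto_mult_right_zero[OF Hlim, of 2] by (simp add: mult.commute)
  qed auto
  have "((\<lambda>R. (1 - cos (Q R)) * H R + W R) \<longlongrightarrow> 0 + Wl) at_top"
    by (intro tendsto_add lim2 Wlim)
  then have L0: "((\<lambda>R. (1 - cos (Q R)) * H R + W R) \<longlongrightarrow> Wl) at_top" by simp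
  have ev: "\<forall>\<^sub>F R in at_top. (1 - cos (Q R)) * H R + W R = integral {s..R} (\<lambda>t. sin (Q t) / t)"
    using eventually_ge_at_top[of s] by eventually_elim (simp add: key W_def)
  have L: "((\<lambda>R. integral {s..R} (\<lambda>t. sin (Q t) / t)) \<longlongrightarrow> Wl) at_top"
    by (rule Lim_transform_eventually[OF L0 ev])
  have "Wl \<ge> 0"
  proof (rule tendsto_lowerbound[OF Wlim])
    show "\<forall>\<^sub>F x in at_top. 0 \<le> W x"
      using eventually_ge_at_top[of s] by eventually_elim (use Wmono[of s] in \<open>auto simp: W_def\<close>)
  qed auto
  with L show ?thesis by blast
qed

definition G3 :: "nat \<Rightarrow> real \<Rightarrow> real" where
  "G3 m y = real m * real (m-1) * (real (m-2) * (y^2/4 - 1)^(m-3) * (y/2)) * (y/2)^2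
     + real m * real (m-1) * (y^2/4 - 1)^(m-2) * (y/2)
     + real m * (real (m-1) * (y^2/4 - 1)^(m-2) * (y/2)) / 2"

lemma G2_deriv: assumes "m \<ge> 3" shows "(G2 m has_real_derivative G3 m y) (at y)"
proof -
  have e: "m - 2 - 1 = m - 3" "m - 1 - 1 = m - 2" by auto
  have D: "((\<lambda>y. real m * real (m-1) * (y^2/4 - 1)^(m-2) * (y/2)^2 + real m * (y^2/4 - 1)^(m-1) / 2)
     has_real_derivative
     (real m * real (m-1) * (real (m-2) * (y^2/4 - 1)^(m-2-1) * (2 * y / 4)) * (y/2)^2
      + real m * real (m-1) * (y^2/4 - 1)^(m-2) * (2 * (y/2) * (1/2))
      + real m * (real (m-1) * (y^2/4 - 1)^(m-1-1) * (2 * y / 4)) / 2)) (at y)"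
    by (auto intro!: derivative_eq_intros simp: algebra_simps)
  have f: "G2 m = (\<lambda>y. real m * real (m-1) * (y^2/4 - 1)^(m-2) * (y/2)^2 + real m * (y^2/4 - 1)^(m-1) / 2)"
    by (rule ext) (simp add: G2_def)
  have v: "real m * real (m-1) * (real (m-2) * (y^2/4 - 1)^(m-2-1) * (2 * y / 4)) * (y/2)^2
      + real m * real (m-1) * (y^2/4 - 1)^(m-2) * (2 * (y/2) * (1/2))
      + real m * (real (m-1) * (y^2/4 - 1)^(m-1-1) * (2 * y / 4)) / 2 = G3 m y"
    unfolding G3_def e by (simp add: algebra_simps)
  show ?thesis using D unfolding f v .
qed

lemma G3_cont: "continuous_on S (G3 m)"
  unfolding G3_def by (auto intro!: continuous_intros)

lemma J2_cont: assumes "n \<ge> 2" shows "continuous_on S (J (G2 (n^2)) n)"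
proof -
  have "2^2 \<le> n^2" using assms by (intro power_mono) auto
  then have "n^2 \<ge> 3" by simp
  then have "\<And>t. (J (G2 (n^2)) n has_real_derivative J (G3 (n^2)) n t) (at t)"
    by (intro J_deriv G2_deriv G3_cont)
  then show ?thesis by (meson DERIV_continuous continuous_at_imp_continuous_on)
qed

lemma nsq: fixes n k :: nat assumes "n \<ge> k" shows "n^2 \<ge> k^2"
  using assms by (intro power_mono) auto

lemma tail_P:
  assumes n: "n \<ge> 20"
  shows "\<exists>s\<in>{4..5}. \<exists>B. ((\<lambda>R. integral {s..R} (\<lambda>t. sin (P_fun n t) / t)) \<longlongrightarrow> B) at_top \<and> B \<ge> 0"
proof -
  define m where "m = n^2"
  have n2: "n \<ge> 2" "n \<ge> 4" using n by auto
  have m400: "m \<ge> 400" unfolding m_def using nsq[OF n] by simp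
  define cc where "cc = c_const n"
  have cc: "cc \<ge> 1/4" "cc > 0" unfolding cc_def using c_bounds[OF n2(1)] by auto
  define a where "a = (if even m then pi else 0)"
  define Q where "Q t = a - cc * J (G0 m) n t" for t
  define dQ where "dQ t = - cc * J (G1 m) n t" for t
  define dQ2 where "dQ2 t = - cc * J (G2 m) n t" for t
  have sinQ: "sin (Q t) = sin (P_fun n t)" for t
  proof (cases "even m")
    case True
    then have "P_fun n t = cc * J (G0 m) n t" unfolding P_J0[OF n2(1)] cc_def m_def by simp
    then show ?thesis unfolding Q_def a_def using True by simp
  next
    case False
    then have "P_fun n t = - cc * J (G0 m) n t" unfolding P_J0[OF n2(1)] cc_def m_def by simp
    then show ?thesis unfolding Q_def a_def using False by simp
  qed
  have d1: "(Q has_real_derivative dQ t) (at t)" for t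
  proof -
    have "(J (G0 m) n has_real_derivative J (G1 m) n t) (at t)"
      using m400 by (intro J_deriv G0_deriv G_cont) auto
    then show ?thesis unfolding Q_def dQ_def by (auto intro!: derivative_eq_intros)
  qed
  have d2: "(dQ has_real_derivative dQ2 t) (at t)" for t
  proof -
    have "(J (G1 m) n has_real_derivative J (G2 m) n t) (at t)"
      using m400 by (intro J_deriv G1_deriv G_cont) auto
    then show ?thesis unfolding dQ_def dQ2_def by (auto intro!: derivative_eq_intros)
  qed
  have c2: "continuous_on S dQ2" for S
    unfolding dQ2_def m_def using J2_cont[OF n2(1)] by (intro continuous_intros) auto
  define k where "k = real m / 32"
  have kpos: "k > 0" unfolding k_def using m400 by simp
  have dQk: "dQ t \<ge> k" if "t \<ge> 4" for t
  proof -
    have "J (G1 m) n t \<le> - real m / 8" unfolding m_def using J1_bound[OF n2(2) that] .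
    then have "cc * (real m / 8) \<le> cc * (- J (G1 m) n t)" using cc by (intro mult_left_mono) auto
    moreover have "(1/4) * (real m / 8) \<le> cc * (real m / 8)" using cc by (intro mult_right_mono) auto
    ultimately show ?thesis unfolding dQ_def k_def by simp
  qed
  have dQ2p: "dQ2 t \<ge> 0" if "t \<ge> 4" for t
  proof -
    have "J (G2 m) n t \<le> 0" unfolding m_def using J2_bound[OF n2(1) that] .
    then show ?thesis unfolding dQ2_def using cc by (simp add: mult_nonneg_nonpos)
  qed
  have k2pi: "k \<ge> 2 * pi" unfolding k_def using m400 pi_less_4 by simp
  have Q45: "Q 5 - Q 4 \<ge> 2 * pi"
  proof -
    have "(\<lambda>t. Q t - k * t) 4 \<le> (\<lambda>t. Q t - k * t) 5"
    proof (rule DERIV_nonneg_imp_nondecreasing[of 4 5 "\<lambda>t. Q t - k * t"])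
      fix x :: real assume x: "4 \<le> x" "x \<le> 5"
      have "((\<lambda>t. Q t - k * t) has_real_derivative dQ x - k * 1) (at x)"
        using DERIV_diff[OF d1 DERIV_cmult_Id[of k x]] by simp
      then show "\<exists>y. ((\<lambda>t. Q t - k * t) has_real_derivative y) (at x) \<and> 0 \<le> y"
        using dQk[of x] x by auto
    qed auto
    then show ?thesis using k2pi by simp
  qed
  have cQ: "continuous_on {4..5} Q"
    using d1 by (intro continuous_at_imp_continuous_on ballI DERIV_continuous) auto
  define j where "j = \<lceil>Q 4 / (2 * pi)\<rceil>"
  have j1: "Q 4 \<le> 2 * pi * of_int j"
  proof -
    have "Q 4 / (2 * pi) \<le> of_int j" unfolding j_def by simp
    then show ?thesis by (simp add: field_simps)
  qed
  have j2: "2 * pi * of_int j \<le> Q 5"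
  proof -
    have "of_int j < Q 4 / (2 * pi) + 1" unfolding j_def by linarith
    then have "2 * pi * of_int j < Q 4 + 2 * pi" by (simp add: field_simps)
    then show ?thesis using Q45 by linarith
  qed
  obtain s where s: "4 \<le> s" "s \<le> 5" "Q s = 2 * pi * of_int j"
    using IVT'[of Q 4 "2 * pi * of_int j" 5, OF j1 j2 _ cQ] by auto
  have "\<exists>B. ((\<lambda>R. integral {s..R} (\<lambda>t. sin (Q t) / t)) \<longlongrightarrow> B) at_top \<and> B \<ge> 0"
  proof (rule tail_abstract)
    show "cos (Q s) = 1" using s(3) by simp
    show "\<And>t. s \<le> t \<Longrightarrow> (Q has_real_derivative dQ t) (at t)" using d1 .
    show "\<And>t. s \<le> t \<Longrightarrow> (dQ has_real_derivative dQ2 t) (at t)" using d2 .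
    show "continuous_on {s..} dQ2" using c2 .
    show "\<And>t. s \<le> t \<Longrightarrow> k \<le> dQ t" using dQk s by auto
    show "\<And>t. s \<le> t \<Longrightarrow> 0 \<le> dQ2 t" using dQ2p s by auto
  qed (use s kpos in auto)
  then show ?thesis using s unfolding sinQ by auto
qed

lemma P_cont: assumes "n \<ge> 2" shows "continuous_on S (P_fun n)"
  using P_deriv[OF assms] by (meson DERIV_continuous continuous_at_imp_continuous_on)

lemma h_cont: assumes "n \<ge> 2" "0 < a" shows "continuous_on {a..b} (\<lambda>t. sin (P_fun n t) / t)"
  using assms by (intro continuous_intros continuous_on_compose2[OF continuous_on_sin P_cont[OF assms(1)]]) auto

lemma h_int: assumes "n \<ge> 2" "0 < a" shows "(\<lambda>t. sin (P_fun n t) / t) integrable_on {a..b}"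
  by (rule integrable_continuous_real[OF h_cont[OF assms]])

lemma int_inv: fixes a b :: real assumes "0 < a" "a \<le> b" shows "integral {a..b} (\<lambda>t. 1 / t) = ln b - ln a"
proof -
  have d: "(ln has_vector_derivative 1 / x) (at x within {a..b})" if x: "x \<in> {a..b}" for x :: real
  proof -
    have "x > 0" using assms x by auto
    then have "(ln has_real_derivative 1 / x) (at x)" by (auto intro!: derivative_eq_intros)
    then show ?thesis
      by (simp add: has_real_derivative_iff_has_vector_derivative[symmetric] has_field_derivative_at_within)
  qed
  have "((\<lambda>t. 1 / t) has_integral (ln b - ln a)) {a..b}"
    using Henstock_Kurzweil_Integration.fundamental_theorem_of_calculus[OF assms(2) d] by simp
  then show ?thesis by (rule integral_unique)
qed

lemma B_part: assumes n: "n \<ge> 20"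
  shows "\<exists>B. ((\<lambda>R. integral {1..R} (\<lambda>t. sin (P_fun n t) / t)) \<longlongrightarrow> B) at_top \<and> B \<ge> - ln 5"
proof -
  have n2: "n \<ge> 2" using n by simp
  let ?h = "\<lambda>t. sin (P_fun n t) / t"
  obtain s B0 where s: "4 \<le> s" "s \<le> 5" and B0: "((\<lambda>R. integral {s..R} ?h) \<longlongrightarrow> B0) at_top" "B0 \<ge> 0"
    using tail_P[OF n] by auto
  define I1 where "I1 = integral {1..s} ?h"
  have ev: "\<forall>\<^sub>F R in at_top. I1 + integral {s..R} ?h = integral {1..R} ?h"
    using eventually_ge_at_top[of s]
  proof eventually_elim
    case (elim R)
    show ?case unfolding I1_def using s elim
      by (intro Henstock_Kurzweil_Integration.integral_combine h_int[OF n2]) auto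
  qed
  have L: "((\<lambda>R. integral {1..R} ?h) \<longlongrightarrow> I1 + B0) at_top"
    by (rule Lim_transform_eventually[OF tendsto_add[OF tendsto_const B0(1)] ev])
  have "- I1 \<le> integral {1..s} (\<lambda>t. 1 / t)"
    unfolding I1_def
  proof -
    have "integral {1..s} (\<lambda>t. - ?h t) \<le> integral {1..s} (\<lambda>t. 1 / t)"
    proof (rule integral_le)
      show "(\<lambda>t. - ?h t) integrable_on {1..s}" using h_int[OF n2, of 1 s] by (simp add: integrable_neg)
      show "(\<lambda>t. 1 / t) integrable_on {1..s}" by (intro integrable_continuous_real continuous_intros) auto
      fix t :: real assume t: "t \<in> {1..s}"
      have "- sin (P_fun n t) \<le> 1" using sin_ge_minus_one[of "P_fun n t"] by linarith
      then have "- sin (P_fun n t) / t \<le> 1 / t" using t by (intro divide_right_mono) auto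
      then show "- ?h t \<le> 1 / t" by simp
    qed
    then show "- integral {1..s} ?h \<le> integral {1..s} (\<lambda>t. 1 / t)" by simp
  qed
  also have "\<dots> = ln s" using int_inv[of 1 s] s by simp
  also have "\<dots> \<le> ln 5" using s by simp
  finally have "I1 + B0 \<ge> - ln 5" using B0(2) by linarith
  with L show ?thesis by blast
qed

lemma A_part: assumes n: "n \<ge> 1000"
  shows "\<exists>A. ((\<lambda>e. integral {e..1} (\<lambda>t. sin (P_fun n t) / t)) \<longlongrightarrow> A) (at_right 0) \<and>
             A \<ge> sin (1/2) * (ln (1/2) - ln (2 / sqrt (real n)))"
proof -
  have n2: "n \<ge> 2" using n by simp
  let ?h = "\<lambda>t. sin (P_fun n t) / t"
  define M where "M = 2 * (c_const n * real (n^2))"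
  define V where "V e = integral {e..1} ?h" for e
  have hnn: "?h t \<ge> 0" if "0 < t" "t \<le> 1" for t
  proof -
    have a: "0 \<le> P_fun n t" by (rule P_nonneg[OF n2]) (use that in auto)
    have b: "P_fun n t \<le> 1" by (rule P_le1[OF n2]) (use that in auto)
    have "0 \<le> sin (P_fun n t)" using pi_gt3 a b by (intro sin_ge_zero) auto
    then show ?thesis using that by simp
  qed
  have hle: "?h t \<le> M" if "0 < t" "t \<le> 1" for t
  proof -
    have "0 \<le> P_fun n t" by (rule P_nonneg[OF n2]) (use that in auto)
    then have "sin (P_fun n t) \<le> P_fun n t" by (rule sin_x_le_x)
    also have "\<dots> \<le> M * t" unfolding M_def by (rule P_lin[OF n2]) (use that in auto)
    finally have "sin (P_fun n t) \<le> M * t" .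
    then show ?thesis using that pos_divide_le_eq[of t "sin (P_fun n t)" M] by (simp add: mult.commute)
  qed
  have Vmono: "V y \<le> V x" if "0 < x" "x \<le> y" "y \<le> 1" for x y
  proof -
    have "V x = integral {x..y} ?h + V y"
      unfolding V_def using that
      by (intro Henstock_Kurzweil_Integration.integral_combine[symmetric] h_int[OF n2]) auto
    moreover have "integral {x..y} ?h \<ge> 0" using that by (intro integral_nonneg h_int[OF n2] hnn) auto
    ultimately show ?thesis by simp
  qed
  have Vbdd: "V x \<le> M" if "0 < x" "x \<le> 1" for x
  proof -
    have "V x \<le> integral {x..1} (\<lambda>t. M)"
      unfolding V_def using that by (intro integral_le h_int[OF n2] hle) auto
    also have "\<dots> = M * (1 - x)" using that by simp
    also have "\<dots> \<le> M"
    proof -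
      have "M \<ge> 0" unfolding M_def using c_bounds[OF n2] by simp
      then show ?thesis using that by (simp add: mult_left_le)
    qed
    finally show ?thesis .
  qed
  define A where "A = (SUP x\<in>{0<..1}. V x)"
  have ba: "bdd_above (V ` {0<..1})" by (rule bdd_aboveI2[where M=M]) (use Vbdd in auto)
  have lim: "(V \<longlongrightarrow> A) (at_right 0)"
  proof (rule increasing_tendsto)
    have "\<forall>z>0. z < 1 \<longrightarrow> V z \<le> A"
    proof (intro allI impI)
      fix z :: real assume z: "0 < z" "z < 1"
      then have "z \<in> {0<..1}" by auto
      then show "V z \<le> A" unfolding A_def by (rule cSUP_upper[OF _ ba])
    qed
    then show "\<forall>\<^sub>F x in at_right 0. V x \<le> A"
      unfolding eventually_at_right_field by (intro exI[of _ 1]) simp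
    fix l assume l: "l < A"
    then obtain y where y: "y \<in> {0<..1}" "l < V y" using less_cSUP_iff[of "{0<..1}" V l, OF _ ba] l unfolding A_def by auto
    have "\<forall>z>0. z < y \<longrightarrow> l < V z"
    proof (intro allI impI)
      fix z :: real assume z: "0 < z" "z < y"
      have "V y \<le> V z" using z y by (intro Vmono) auto
      then show "l < V z" using y by simp
    qed
    then show "\<forall>\<^sub>F x in at_right 0. l < V x"
      unfolding eventually_at_right_field using y by (intro exI[of _ y]) simp
  qed
  define d where "d = 2 / sqrt (real n)"
  have rn: "real n \<ge> 1000" using n by simp
  have sq: "sqrt (real n) \<ge> 8" using rn by (intro real_le_rsqrt) simp
  have dpos: "d > 0" unfolding d_def using rn by simp
  have "2 / sqrt (real n) \<le> 2 / 8" using sq rn by (intro divide_left_mono) auto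
  then have d4: "d \<le> 1/4" unfolding d_def by simp
  have "A \<ge> V d" unfolding A_def using dpos d4 by (intro cSUP_upper ba) auto
  moreover have "V d \<ge> integral {d..1/2} ?h"
  proof -
    have "V d = integral {d..1/2} ?h + integral {1/2..1} ?h"
      unfolding V_def using dpos d4
      by (intro Henstock_Kurzweil_Integration.integral_combine[symmetric] h_int[OF n2]) auto
    moreover have "integral {1/2..1} ?h \<ge> 0" by (intro integral_nonneg h_int[OF n2] hnn) auto
    ultimately show ?thesis by simp
  qed
  moreover have "integral {d..1/2} ?h \<ge> integral {d..1/2} (\<lambda>t. sin (1/2) * (1 / t))"
  proof (rule integral_le)
    show "(\<lambda>t. sin (1/2) * (1 / t)) integrable_on {d..1/2}"
      using dpos by (intro integrable_continuous_real continuous_intros) auto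
    show "?h integrable_on {d..1/2}" using dpos by (intro h_int[OF n2])
    fix t assume t: "t \<in> {d..1/2}"
    have "P_fun n t \<ge> 1/2" by (rule P_good[OF n]) (use t in \<open>auto simp: d_def\<close>)
    moreover have "P_fun n t \<le> 1" using t dpos by (intro P_le1[OF n2]) auto
    ultimately have "sin (1/2) \<le> sin (P_fun n t)" using pi_gt3 by (intro sin_monotone_2pi_le) auto
    then show "sin (1/2) * (1 / t) \<le> ?h t" using t dpos by (simp add: divide_right_mono)
  qed
  moreover have "integral {d..1/2} (\<lambda>t. sin (1/2) * (1 / t)) = sin (1/2) * (ln (1/2) - ln d)"
  proof -
    have "integral {d..1/2} (\<lambda>t. sin (1/2) * (1 / t)) = sin (1/2) * integral {d..1/2} (\<lambda>t. 1 / t)"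
      by (rule Henstock_Kurzweil_Integration.integral_mult_right)
    moreover have "integral {d..1/2} (\<lambda>t. 1 / t) = ln (1/2) - ln d"
      using dpos d4 by (intro int_inv) auto
    ultimately show ?thesis by simp
  qed
  ultimately have "A \<ge> sin (1/2) * (ln (1/2) - ln d)" by linarith
  with lim show ?thesis unfolding V_def d_def by blast
qed

lemma exp_diff_sin: "exp (\<i> * complex_of_real x) - exp (- (\<i> * complex_of_real x)) = 2 * \<i> * complex_of_real (sin x)"
proof -
  have "sin (complex_of_real x) = (exp(\<i> * complex_of_real x) - exp(-(\<i> * complex_of_real x))) / (2*\<i>)"
    by (rule sin_exp_eq)
  then show ?thesis by (simp add: sin_of_real field_simps)
qed

lemma g_cont: assumes "n \<ge> 2" "0 < a" "a \<le> b"
  shows "continuous_on {a..b} (\<lambda>t. exp (\<i> * complex_of_real (P_fun n t)) / complex_of_real t)"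
  using assms by (intro continuous_intros continuous_on_compose2[OF continuous_on_of_real P_cont[OF assms(1)]]) auto

lemma pv_integral:
  assumes n: "n \<ge> 2" and e: "0 < e" "e \<le> R"
  shows "integral {t. e \<le> \<bar>t\<bar> \<and> \<bar>t\<bar> \<le> R} (\<lambda>t. exp (\<i> * complex_of_real (P_fun n t)) / complex_of_real t)
       = 2 * \<i> * complex_of_real (integral {e..R} (\<lambda>t. sin (P_fun n t) / t))"
proof -
  define g where "g t = exp (\<i> * complex_of_real (P_fun n t)) / complex_of_real t" for t
  have S: "{t. e \<le> \<bar>t\<bar> \<and> \<bar>t\<bar> \<le> R} = {-R..-e} \<union> {e..R}" using e by auto
  have ig1: "g integrable_on {e..R}" unfolding g_def using g_cont[OF n e] by (rule integrable_continuous_real)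
  have ig2: "g integrable_on {-R..-e}"
  proof -
    have "(\<lambda>x. g (- x)) integrable_on {e..R}" unfolding g_def P_odd[OF n]
      using e by (intro integrable_continuous_real continuous_intros
          continuous_on_compose2[OF continuous_on_of_real P_cont[OF n]]) auto
    then show ?thesis using Henstock_Kurzweil_Integration.integrable_reflect_real[where f="\<lambda>x. g (-x)" and a=e and b=R] by simp
  qed
  have neg: "negligible ({-R..-e} \<inter> {e..R})" using e by (simp add: Int_commute)
  have "integral {t. e \<le> \<bar>t\<bar> \<and> \<bar>t\<bar> \<le> R} g = integral {-R..-e} g + integral {e..R} g"
    unfolding S using ig2 ig1 neg by (rule Henstock_Kurzweil_Integration.integral_Un)
  also have "integral {-R..-e} g = integral {e..R} (\<lambda>x. g (- x))"
    using Henstock_Kurzweil_Integration.integral_reflect_real[where f="\<lambda>x. g (-x)" and a=e and b=R] by simp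
  also have "integral {e..R} (\<lambda>x. g (- x)) + integral {e..R} g = integral {e..R} (\<lambda>x. g (- x) + g x)"
  proof -
    have "(\<lambda>x. g (- x)) integrable_on {e..R}"
      using ig2 Henstock_Kurzweil_Integration.integrable_reflect_real[where f="\<lambda>x. g (-x)" and a=e and b=R] by simp
    then show ?thesis using ig1 by (simp add: integral_add)
  qed
  also have "\<dots> = integral {e..R} (\<lambda>x. 2 * \<i> * complex_of_real (sin (P_fun n x) / x))"
  proof (rule integral_cong)
    fix x assume x: "x \<in> {e..R}"
    then have x0: "x \<noteq> 0" using e by auto
    have "g (- x) + g x = (exp (\<i> * complex_of_real (P_fun n x)) - exp (- (\<i> * complex_of_real (P_fun n x)))) / complex_of_real x"
      unfolding g_def using x0 P_odd[OF n, of x] by (simp add: field_simps)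
    also have "\<dots> = 2 * \<i> * complex_of_real (sin (P_fun n x) / x)"
      unfolding exp_diff_sin by simp
    finally show "g (- x) + g x = 2 * \<i> * complex_of_real (sin (P_fun n x) / x)" .
  qed
  also have "\<dots> = 2 * \<i> * complex_of_real (integral {e..R} (\<lambda>t. sin (P_fun n t) / t))"
  proof -
    have "((\<lambda>x. complex_of_real (sin (P_fun n x) / x)) has_integral complex_of_real (integral {e..R} (\<lambda>t. sin (P_fun n t) / t))) {e..R}"
      using h_int[OF n e(1)] by (intro has_integral_of_real) auto
    then have "((\<lambda>x. 2 * \<i> * complex_of_real (sin (P_fun n x) / x)) has_integral 2 * \<i> * complex_of_real (integral {e..R} (\<lambda>t. sin (P_fun n t) / t))) {e..R}"
      by (rule has_integral_mult_right)
    then show ?thesis by (rule integral_unique)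
  qed
  finally show ?thesis unfolding g_def .
qed

lemma pv_main: assumes n: "n \<ge> 1000"
  shows "\<exists>L. pv_has_value (\<lambda>t. exp (\<i> * complex_of_real (P_fun n t)) / complex_of_real t) L \<and>
     cmod L \<ge> 2 * (sin (1/2) * (ln (1/2) - ln (2 / sqrt (real n))) - ln 5)"
proof -
  have n2: "n \<ge> 2" and n20: "n \<ge> 20" using n by auto
  let ?h = "\<lambda>t. sin (P_fun n t) / t"
  let ?g = "\<lambda>t. exp (\<i> * complex_of_real (P_fun n t)) / complex_of_real t"
  obtain A where A: "((\<lambda>e. integral {e..1} ?h) \<longlongrightarrow> A) (at_right 0)"
      "A \<ge> sin (1/2) * (ln (1/2) - ln (2 / sqrt (real n)))"
    using A_part[OF n] by auto
  obtain B where B: "((\<lambda>R. integral {1..R} ?h) \<longlongrightarrow> B) at_top" "B \<ge> - ln 5"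
    using B_part[OF n20] by auto
  define L where "L = 2 * \<i> * complex_of_real (A + B)"
  define F where "F = (at_right (0::real)) \<times>\<^sub>F (at_top :: real filter)"
  have f1: "filterlim fst (at_right 0) F" unfolding F_def filterlim_def by (rule filtermap_fst_prod_filter)
  have f2: "filterlim snd at_top F" unfolding F_def filterlim_def by (rule filtermap_snd_prod_filter)
  have t1: "((\<lambda>p. integral {fst p..1} ?h) \<longlongrightarrow> A) F" by (rule filterlim_compose[OF A(1) f1])
  have t2: "((\<lambda>p. integral {1..snd p} ?h) \<longlongrightarrow> B) F" by (rule filterlim_compose[OF B(1) f2])
  have t3: "((\<lambda>p. 2 * \<i> * complex_of_real (integral {fst p..1} ?h + integral {1..snd p} ?h)) \<longlongrightarrow> L) F"
    unfolding L_def by (intro tendsto_intros t1 t2)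
  have ev1: "\<forall>\<^sub>F e in at_right (0::real). 0 < e \<and> e \<le> 1"
    unfolding eventually_at_right_field by (intro exI[of _ 1]) auto
  have ev2: "\<forall>\<^sub>F R in (at_top::real filter). 1 \<le> R" by (rule eventually_ge_at_top)
  have ev: "\<forall>\<^sub>F p in F. 2 * \<i> * complex_of_real (integral {fst p..1} ?h + integral {1..snd p} ?h)
      = (\<lambda>(e, R). integral {t. e \<le> \<bar>t\<bar> \<and> \<bar>t\<bar> \<le> R} ?g) p"
    unfolding F_def using eventually_prodI[OF ev1 ev2]
  proof (rule eventually_mono)
    fix p :: "real \<times> real" assume p: "(0 < fst p \<and> fst p \<le> 1) \<and> 1 \<le> snd p"
    have "integral {fst p..1} ?h + integral {1..snd p} ?h = integral {fst p..snd p} ?h"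
      using p by (intro Henstock_Kurzweil_Integration.integral_combine h_int[OF n2]) auto
    moreover have "integral {t. fst p \<le> \<bar>t\<bar> \<and> \<bar>t\<bar> \<le> snd p} ?g = 2 * \<i> * complex_of_real (integral {fst p..snd p} ?h)"
      using p by (intro pv_integral[OF n2]) auto
    ultimately show "2 * \<i> * complex_of_real (integral {fst p..1} ?h + integral {1..snd p} ?h)
      = (\<lambda>(e, R). integral {t. e \<le> \<bar>t\<bar> \<and> \<bar>t\<bar> \<le> R} ?g) p"
      by (simp add: case_prod_beta)
  qed
  have pv: "pv_has_value ?g L" unfolding pv_has_value_def F_def[symmetric]
    by (rule Lim_transform_eventually[OF t3 ev])
  have "cmod L = 2 * \<bar>A + B\<bar>" unfolding L_def by (simp add: norm_mult del: of_real_add)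
  moreover have "(2::real) * (A + B) \<le> 2 * \<bar>A + B\<bar>" by (rule mult_left_mono[OF abs_ge_self]) simp
  ultimately have "cmod L \<ge> 2 * (A + B)" by simp
  with A(2) B(2) pv show ?thesis by (intro exI[of _ L]) auto
qed

definition mu :: "nat \<Rightarrow> nat \<Rightarrow> real" where
  "mu n r = integral {-1..1} (\<lambda>x. fc n x * (-x)^r)"

definition acoef :: "nat \<Rightarrow> nat \<Rightarrow> nat \<Rightarrow> real" where
  "acoef n k i = c_const n * of_nat (n^2 choose k) * (-1/4)^k * of_nat (2*k choose i) * mu n (2*k - i)"

definition ppoly :: "nat \<Rightarrow> real poly" where
  "ppoly n = (\<Sum>k\<le>n^2. \<Sum>i\<le>2*k. monom (acoef n k i) i)"

lemma expand: fixes t x :: real shows "(1 - (t - x)^2/4)^m =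
   (\<Sum>k\<le>m. \<Sum>i\<le>2*k. of_nat (m choose k) * (-1/4)^k * of_nat (2*k choose i) * t^i * (-x)^(2*k - i))"
proof -
  have "(1 - (t - x)^2/4)^m = (-((t-x)^2/4) + 1)^m" by simp
  also have "\<dots> = (\<Sum>k\<le>m. of_nat (m choose k) * (-((t-x)^2/4))^k * 1^(m-k))"
    by (rule binomial_ring)
  also have "\<dots> = (\<Sum>k\<le>m. of_nat (m choose k) * (-1/4)^k * (t + (-x))^(2*k))"
  proof (rule sum.cong)
    fix k assume "k \<in> {..m}"
    have "(-((t-x)^2/4))^k = (-1/4)^k * ((t-x)^2)^k"
      by (metis (no_types, lifting) divide_minus_left minus_divide_left power_mult_distrib times_divide_eq_left mult.commute mult_1 divide_inverse mult_minus1)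
    then show "of_nat (m choose k) * (-((t-x)^2/4))^k * 1^(m-k) = of_nat (m choose k) * (-1/4)^k * (t + (-x))^(2*k)"
      by (simp add: power_mult)
  qed simp
  also have "\<dots> = (\<Sum>k\<le>m. of_nat (m choose k) * (-1/4)^k * (\<Sum>i\<le>2*k. of_nat (2*k choose i) * t^i * (-x)^(2*k - i)))"
    by (simp only: binomial_ring)
  also have "\<dots> = (\<Sum>k\<le>m. \<Sum>i\<le>2*k. of_nat (m choose k) * (-1/4)^k * of_nat (2*k choose i) * t^i * (-x)^(2*k - i))"
    by (simp add: sum_distrib_left mult.assoc)
  finally show ?thesis .
qed

lemma P_poly: assumes "n \<ge> 2" shows "P_fun n t = poly (ppoly n) t"
proof -
  let ?m = "n^2"
  define b where "b k i = c_const n * of_nat (?m choose k) * (-1/4)^k * of_nat (2*k choose i) * t^i" for k i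
  have pt: "fc n x * phi n (t - x) = (\<Sum>k\<le>?m. \<Sum>i\<le>2*k. b k i * (fc n x * (-x)^(2*k - i)))" for x
    unfolding phi_def expand b_def by (simp add: sum_distrib_left mult_ac)
  have int: "(\<lambda>x. fc n x * (-x)^r) integrable_on {-1..1}" for r
    by (intro integrable_continuous_real continuous_intros fc_cont)
  have "P_fun n t = integral {-1..1} (\<lambda>x. \<Sum>k\<le>?m. \<Sum>i\<le>2*k. b k i * (fc n x * (-x)^(2*k - i)))"
    unfolding P_J[OF assms] J_def pt ..
  also have "\<dots> = (\<Sum>k\<le>?m. \<Sum>i\<le>2*k. b k i * mu n (2*k - i))"
    unfolding mu_def
    by (subst integral_sum, simp, intro integrable_sum int integrable_on_mult_right finite_atMost,
        rule sum.cong, simp, subst integral_sum, simp, intro int integrable_on_mult_right, simp)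
  also have "\<dots> = poly (ppoly n) t"
    unfolding ppoly_def poly_sum poly_monom b_def acoef_def by (simp add: mult_ac)
  finally show ?thesis .
qed

lemma coeff_ppoly: "coeff (ppoly n) j = (\<Sum>k\<le>n^2. if j \<le> 2*k then acoef n k j else 0)"
  unfolding ppoly_def coeff_sum coeff_monom
  by (rule sum.cong) (auto simp: sum.delta)

lemma mu0: assumes "n \<ge> 2" shows "mu n 0 = 0"
proof -
  have "mu n 0 = integral {0..1} (\<lambda>x. fc n x * (-x)^0 + fc n (-x) * (- (-x))^0)"
    unfolding mu_def by (rule sym_int) (intro continuous_intros fc_cont)
  then show ?thesis by (simp add: fc_odd)
qed

lemma mu1: assumes "n \<ge> 4" shows "mu n 1 < 0"
proof -
  have n2: "n \<ge> 2" using assms by simp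
  have "mu n 1 = integral {0..1} (\<lambda>x. fc n x * (-x)^1 + fc n (-x) * (- (-x))^1)"
    unfolding mu_def by (rule sym_int) (intro continuous_intros fc_cont)
  also have "\<dots> = - integral {0..1} (\<lambda>x. 2 * x * fc n x)"
    by (simp add: fc_odd algebra_simps flip: integral_neg)
  finally have e: "mu n 1 = - integral {0..1} (\<lambda>x. 2 * x * fc n x)" .
  have i: "(\<lambda>x. 2 * x * fc n x) integrable_on {a..b}" for a b
    by (intro integrable_continuous_real continuous_intros fc_cont)
  have "integral {1/2..3/4::real} (\<lambda>x. 1) \<le> integral {1/2..3/4} (\<lambda>x. 2 * x * fc n x)"
  proof (rule integral_le)
    fix x :: real assume x: "x \<in> {1/2..3/4}"
    have rn: "real n \<ge> 4" using assms by simp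
    have "1 / real n \<le> 1/4" using rn by (intro divide_left_mono) auto
    then have "1 / real n \<le> x" "x \<le> 1 - 1 / real n" using x by auto
    then have "fc n x = 1" by (intro fc_one[OF n2])
    then show "1 \<le> 2 * x * fc n x" using x by simp
  qed (auto intro: i)
  also have "\<dots> \<le> integral {0..1} (\<lambda>x. 2 * x * fc n x)"
  proof (rule integral_subset_le)
    show "\<forall>x\<in>{0..1}. 0 \<le> 2 * x * fc n x"
    proof
      fix x :: real assume "x \<in> {0..1}"
      then show "0 \<le> 2 * x * fc n x" using fc_nonneg[OF n2, of x] by simp
    qed
  qed (auto intro: i)
  finally have "integral {0..1} (\<lambda>x. 2 * x * fc n x) > 0" by simp
  then show ?thesis using e by simp
qed

lemma deg_ppoly: assumes "n \<ge> 4" shows "degree (ppoly n) = 2 * n^2 - 1"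
proof -
  let ?m = "n^2"
  have n2: "n \<ge> 2" using assms by simp
  have m1: "?m \<ge> 1" using assms by simp
  have top: "coeff (ppoly n) j = (if j \<le> 2 * ?m then acoef n ?m j else 0)" if "j \<ge> 2 * ?m - 1" for j
  proof -
    have "{..?m} = insert ?m {..<?m}" by auto
    then have "coeff (ppoly n) j = (if j \<le> 2 * ?m then acoef n ?m j else 0)
        + (\<Sum>k<?m. if j \<le> 2*k then acoef n k j else 0)"
      unfolding coeff_ppoly by simp
    moreover have "(\<Sum>k<?m. if j \<le> 2*k then acoef n k j else 0) = 0"
      using that by (intro sum.neutral) auto
    ultimately show ?thesis by simp
  qed
  have c0: "coeff (ppoly n) j = 0" if "j > 2 * ?m - 1" for j
  proof (cases "j = 2 * ?m")
    case True
    then have "coeff (ppoly n) j = acoef n ?m (2 * ?m)" using top[of j] by simp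
    also have "\<dots> = 0" unfolding acoef_def using mu0[OF n2] by simp
    finally show ?thesis .
  next
    case False
    then show ?thesis using top[of j] that by simp
  qed
  have c1: "coeff (ppoly n) (2 * ?m - 1) \<noteq> 0"
  proof -
    have e1: "coeff (ppoly n) (2 * ?m - 1) = acoef n ?m (2 * ?m - 1)" using top[of "2 * ?m - 1"] by simp
    have b: "2 * ?m choose (2 * ?m - 1) = 2 * ?m"
    proof -
      have "2 * ?m = Suc (2 * ?m - 1)" using m1 by simp
      then show ?thesis by (metis binomial_Suc_n)
    qed
    have d: "2 * ?m - (2 * ?m - 1) = 1" using m1 by simp
    have e2: "acoef n ?m (2 * ?m - 1) = c_const n * (-1/4)^?m * of_nat (2 * ?m) * mu n 1"
      unfolding acoef_def b d binomial_n_n by simp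
    have "c_const n \<noteq> 0" using c_bounds[OF n2] by simp
    moreover have "(-1/4::real)^?m \<noteq> 0" by simp
    moreover have "of_nat (2 * ?m) \<noteq> (0::real)" using assms by simp
    moreover have "mu n 1 \<noteq> 0" using mu1[OF assms] by simp
    ultimately have "c_const n * (-1/4)^?m * of_nat (2 * ?m) * mu n 1 \<noteq> 0" by simp
    then show ?thesis unfolding e1 e2 .
  qed
  have "degree (ppoly n) \<le> 2 * ?m - 1" by (rule degree_le) (use c0 in auto)
  moreover have "2 * ?m - 1 \<le> degree (ppoly n)" by (rule le_degree[OF c1])
  ultimately show ?thesis by simp
qed

lemma final_bound:
  fixes s :: real and n :: nat
  assumes s: "s > 0" and n: "n \<ge> 1000" and nX: "ln (real n) \<ge> (4/3) * (4 * ln 2 + ln 2 / 8 + 2 * ln 5 / s)"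
  shows "s / 8 * ln (real (2 * n^2 - 1)) \<le> 2 * (s * (ln (1/2) - ln (2 / sqrt (real n))) - ln 5)"
proof -
  have rn: "real n \<ge> 1000" using n by simp
  have e1: "ln (2 / sqrt (real n)) = ln 2 - ln (real n) / 2"
    using rn by (simp add: ln_div ln_sqrt)
  have e2: "ln (1/2::real) = - ln 2" by (simp add: ln_div)
  have r: "real (2 * n^2 - 1) = 2 * real n ^ 2 - 1" using n by (simp add: of_nat_diff)
  have "ln (real (2 * n^2 - 1)) \<le> ln (2 * real n ^ 2)"
  proof -
    have p: "real n ^ 2 \<ge> 1" using rn by (intro one_le_power) auto
    have q: "1 < 2 * real n ^ 2" using p by linarith
    then show ?thesis unfolding r using n by (subst ln_le_cancel_iff) auto
  qed
  also have "\<dots> = ln 2 + 2 * ln (real n)" using rn by (simp add: ln_mult ln_realpow)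
  finally have l: "ln (real (2 * n^2 - 1)) \<le> ln 2 + 2 * ln (real n)" .
  have "s / 8 * ln (real (2 * n^2 - 1)) \<le> s / 8 * (ln 2 + 2 * ln (real n))"
    using l s by (intro mult_left_mono) auto
  moreover have "s / 8 * (ln 2 + 2 * ln (real n)) \<le> 2 * (s * (- ln 2 - (ln 2 - ln (real n) / 2)) - ln 5)"
  proof -
    have "s * ((4/3) * (4 * ln 2 + ln 2 / 8 + 2 * ln 5 / s)) \<le> s * ln (real n)"
      using nX s by (intro mult_left_mono) auto
    then have "(4/3) * (s * (4 * ln 2) + s * (ln 2 / 8) + 2 * ln 5) \<le> s * ln (real n)"
      using s by (simp add: algebra_simps)
    then show ?thesis by (simp add: algebra_simps)
  qed
  ultimately show ?thesis unfolding e1 e2 by linarith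
qed

theorem proposition2:
  "\<exists>c > (0::real). \<exists>N::nat. \<forall>n \<ge> N.
     (\<exists>p :: real poly. degree p = 2 * n\<^sup>2 - 1 \<and> (\<forall>t. P_fun n t = poly p t)) \<and>
     (\<exists>L. pv_has_value (\<lambda>t. exp (\<i> * complex_of_real (P_fun n t)) / complex_of_real t) L \<and>
          cmod L \<ge> c * ln (real (2 * n\<^sup>2 - 1)))"
proof -
  define s where "s = sin (1/2::real)"
  have s: "s > 0" unfolding s_def using pi_gt3 by (intro sin_gt_zero) auto
  define X where "X = (4/3) * (4 * ln 2 + ln 2 / 8 + 2 * ln 5 / s)"
  define N where "N = max 1000 (nat \<lceil>exp X\<rceil>)"
  have "\<forall>n \<ge> N.
     (\<exists>p :: real poly. degree p = 2 * n\<^sup>2 - 1 \<and> (\<forall>t. P_fun n t = poly p t)) \<and>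
     (\<exists>L. pv_has_value (\<lambda>t. exp (\<i> * complex_of_real (P_fun n t)) / complex_of_real t) L \<and>
          cmod L \<ge> s / 8 * ln (real (2 * n\<^sup>2 - 1)))"
  proof (intro allI impI conjI)
    fix n assume nN: "n \<ge> N"
    then have n: "n \<ge> 1000" unfolding N_def by simp
    show "\<exists>p :: real poly. degree p = 2 * n\<^sup>2 - 1 \<and> (\<forall>t. P_fun n t = poly p t)"
      using deg_ppoly[of n] P_poly[of n] n by auto
    have "real n \<ge> exp X"
    proof -
      have "nat \<lceil>exp X\<rceil> \<le> N" unfolding N_def by simp
      then have "nat \<lceil>exp X\<rceil> \<le> n" using nN by linarith
      then have "real (nat \<lceil>exp X\<rceil>) \<le> real n" by (simp only: of_nat_le_iff)
      moreover have "real (nat \<lceil>exp X\<rceil>) = of_int \<lceil>exp X\<rceil>"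
        by (rule of_nat_nat) (use exp_gt_zero[of X] in \<open>linarith\<close>)
      moreover have "exp X \<le> of_int \<lceil>exp X\<rceil>" by (rule le_of_int_ceiling)
      ultimately show ?thesis by linarith
    qed
    then have nX: "ln (real n) \<ge> X" by (metis exp_gt_zero ln_exp ln_le_cancel_iff order_less_le_trans)
    obtain L where L: "pv_has_value (\<lambda>t. exp (\<i> * complex_of_real (P_fun n t)) / complex_of_real t) L"
      "cmod L \<ge> 2 * (sin (1/2) * (ln (1/2) - ln (2 / sqrt (real n))) - ln 5)"
      using pv_main[OF n] by auto
    have "s / 8 * ln (real (2 * n^2 - 1)) \<le> 2 * (s * (ln (1/2) - ln (2 / sqrt (real n))) - ln 5)"
      using final_bound[OF s n] nX unfolding X_def by simp
    then show "\<exists>L. pv_has_value (\<lambda>t. exp (\<i> * complex_of_real (P_fun n t)) / complex_of_real t) L \<and>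
          cmod L \<ge> s / 8 * ln (real (2 * n\<^sup>2 - 1))"
      using L unfolding s_def by (intro exI[of _ L]) auto
  qed
  moreover have "s / 8 > 0" using s by simp
  ultimately show ?thesis by blast
qed

end
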